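(* Let $T(x)=\int_{\mathbb R}e^{-\sqrt2|x-y|}\mathrm{sech}^2(y)\,dy$. For integers $k\ge1$ set (integrals over $\mathbb R$ in $x$) $p_k=\int\mathrm{sech}^k\cos$, $q_k=\int\mathrm{sech}^k\log(\mathrm{sech})\cos$, $r_k=\int\mathrm{sech}^kT\cos$, $s_k=\int\mathrm{sech}^kT\tanh\sin$, $a_k=\int x\,\mathrm{sech}^k\tanh\cos$, $b_k=\int\mathrm{sech}^k\tanh\sin$, $c_k=\int\mathrm{sech}^k\log(\mathrm{sech})\tanh\sin$, $d_k=\int x\,\mathrm{sech}^k\sin$, $e_k=\int\mathrm{sech}^k\tanh\,T'\cos$, $f_k=\int\mathrm{sech}^kT'\sin$. Then for every integer $k\ge1$: \begin{align*} b_k&=(k+1)p_{k+2}-kp_k,\\ c_k&=(k+1)q_{k+2}-kq_k+p_{k+2}-p_k,\\ d_k&=-ka_k+p_k,\\ e_k&=s_k+kr_k-(k+1)r_{k+2},\\ f_k&=-r_k+ks_k. \end{align*}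
   Context: $\mathrm{sech},\tanh,\cos,\sin$ denote the functions $\mathrm{sech}(x),\tanh(x),\cos(x),\sin(x)$, products are pointwise, primes denote $d/dx$. *)

theory Defs
  imports "HOL-Analysis.Analysis"
begin

definition sech :: "real \<Rightarrow> real" where
  "sech x = 1 / cosh x"

definition T :: "real \<Rightarrow> real" where
  "T x = integral UNIV (\<lambda>y. exp (- sqrt 2 * \<bar>x - y\<bar>) * sech y ^ 2)"

definition p :: "nat \<Rightarrow> real" where
  "p k = integral UNIV (\<lambda>x. sech x ^ k * cos x)"
definition q :: "nat \<Rightarrow> real" where
  "q k = integral UNIV (\<lambda>x. sech x ^ k * ln (sech x) * cos x)"
definition r :: "nat \<Rightarrow> real" where
  "r k = integral UNIV (\<lambda>x. sech x ^ k * T x * cos x)"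
definition s :: "nat \<Rightarrow> real" where
  "s k = integral UNIV (\<lambda>x. sech x ^ k * T x * tanh x * sin x)"
definition a :: "nat \<Rightarrow> real" where
  "a k = integral UNIV (\<lambda>x. x * sech x ^ k * tanh x * cos x)"
definition b :: "nat \<Rightarrow> real" where
  "b k = integral UNIV (\<lambda>x. sech x ^ k * tanh x * sin x)"
definition c :: "nat \<Rightarrow> real" where
  "c k = integral UNIV (\<lambda>x. sech x ^ k * ln (sech x) * tanh x * sin x)"
definition d :: "nat \<Rightarrow> real" where
  "d k = integral UNIV (\<lambda>x. x * sech x ^ k * sin x)"
definition e :: "nat \<Rightarrow> real" where
  "e k = integral UNIV (\<lambda>x. sech x ^ k * tanh x * deriv T x * cos x)"
definition f :: "nat \<Rightarrow> real" where
  "f k = integral UNIV (\<lambda>x. sech x ^ k * deriv T x * sin x)"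

end

theory Submission
  imports Defs
begin

lemma sech_pos: "sech x > 0" by (simp add: sech_def)
lemma sech_le1: "sech x \<le> 1"
  unfolding sech_def using cosh_real_ge_1[of x] by simp
lemma tanh_sq: "tanh x ^ 2 = 1 - sech x ^ 2"
proof -
  have "cosh x ^ 2 = sinh x ^ 2 + 1" by (rule cosh_square_eq)
  moreover have "cosh x \<noteq> 0" using cosh_real_pos[of x] by linarith
  moreover have "sinh x ^ 2 + 1 \<noteq> 0" using zero_le_power2[of "sinh x"] by linarith
  ultimately show ?thesis unfolding tanh_def sech_def
    by (simp add: power_divide divide_simps)
qed
lemma abs_tanh_le: "\<bar>tanh x\<bar> \<le> (1::real)"
  using tanh_real_bounds[of x] by auto

lemma D_sech: "(sech has_real_derivative (- sech x * tanh x)) (at x)"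
proof -
  have "((\<lambda>x. 1 / cosh x) has_real_derivative (- sinh x / (cosh x)^2)) (at x)"
    using cosh_real_pos[of x]
    by (auto intro!: derivative_eq_intros simp: power2_eq_square field_simps)
  then show ?thesis unfolding sech_def[abs_def] tanh_def
    by (simp add: power2_eq_square field_simps)
qed
lemma D_tanh: "(tanh has_real_derivative (sech x ^ 2)) (at x)"
proof -
  have "(tanh has_real_derivative (1 - tanh x ^ 2)) (at x)"
    by (auto intro!: derivative_eq_intros)
  then show ?thesis using tanh_sq[of x] by simp
qed
lemma D_lnsech: "((\<lambda>x. ln (sech x)) has_real_derivative (- tanh x)) (at x)"
proof -
  have "((\<lambda>x. ln (sech x)) has_real_derivative (1 / sech x * (- sech x * tanh x))) (at x)"
    using DERIV_chain2[OF DERIV_ln[OF sech_pos] D_sech] by (simp add: divide_inverse)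
  then show ?thesis using sech_pos[of x] by simp
qed

lemma sech_exp: "sech x \<le> 2 * exp (- \<bar>x\<bar>)"
proof -
  have "exp \<bar>x\<bar> \<le> 2 * cosh x"
    unfolding cosh_def by (cases "x \<ge> 0") auto
  then show ?thesis unfolding sech_def using cosh_real_pos[of x]
    by (simp add: exp_minus field_simps)
qed
lemma ln_sech_abs: "\<bar>ln (sech x)\<bar> \<le> \<bar>x\<bar>"
proof -
  have c1: "cosh x \<ge> 1" by (rule cosh_real_ge_1)
  have "cosh x \<le> exp \<bar>x\<bar>"
    unfolding cosh_def by (cases "x \<ge> 0") auto
  then have "ln (cosh x) \<le> \<bar>x\<bar>" using c1
    by (metis cosh_real_pos ln_exp ln_le_cancel_iff exp_gt_zero)
  moreover have "ln (cosh x) \<ge> 0" using c1 by simp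
  ultimately show ?thesis unfolding sech_def using cosh_real_pos[of x]
    by (simp add: ln_div)
qed

lemma cont_meas: "continuous_on UNIV (h::real\<Rightarrow>real) \<Longrightarrow> h \<in> borel_measurable lebesgue"
  using continuous_imp_measurable_on_sets_lebesgue[of UNIV h] by (simp add: lebesgue_on_UNIV_eq)

definition w :: "real \<Rightarrow> real" where "w x = exp (- \<bar>x\<bar> / 2)"

lemma w_pos: "w x > 0" by (simp add: w_def)

lemma weight_bound: "(1 + \<bar>x\<bar>) * sech x \<le> 4 * w x"
proof -
  have "1 + \<bar>x\<bar>/2 \<le> exp (\<bar>x\<bar>/2)" by (rule exp_ge_add_one_self)
  then have h: "1 + \<bar>x\<bar> \<le> 2 * exp (\<bar>x\<bar>/2)" by linarith
  have "(1 + \<bar>x\<bar>) * sech x \<le> (2 * exp (\<bar>x\<bar>/2)) * (2 * exp (- \<bar>x\<bar>))"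
    by (rule mult_mono[OF h sech_exp]) (use sech_pos[of x] in auto)
  also have "\<dots> = 4 * (exp (\<bar>x\<bar>/2) * exp (- \<bar>x\<bar>))" by simp
  also have "exp (\<bar>x\<bar>/2) * exp (- \<bar>x\<bar>) = w x"
    unfolding w_def by (simp add: exp_add[symmetric])
  finally show ?thesis by simp
qed

lemma cont_w: "continuous_on UNIV w" unfolding w_def by (intro continuous_intros) auto

lemma w_integrable_leb: "integrable lebesgue w"
proof -
  have "(\<lambda>x. exp (-(1/2)*x)) integrable_on {0::real..}"
    by (rule integrable_on_exp_minus_to_infinity) simp
  then have "(\<lambda>x. exp (-(1/2)*x)) absolutely_integrable_on {0::real..}"
    by (intro nonnegative_absolutely_integrable_1) auto
  then have i0: "integrable lebesgue (\<lambda>x. indicator {0::real..} x * exp (-(1/2)*x))"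
    unfolding set_integrable_def by simp
  have i1: "integrable lebesgue (\<lambda>x. indicator {0::real..} (0 + (-1) * x) * exp (-(1/2)*(0 + (-1)*x)))"
    using lebesgue_integrable_real_affine_iff[of "-1" "\<lambda>x. indicator {0::real..} x * exp (-(1/2)*x)" 0] i0
    by simp
  have "integrable lebesgue (\<lambda>x. indicator {0::real..} x * exp (-(1/2)*x) +
        indicator {0::real..} (0 + (-1) * x) * exp (-(1/2)*(0 + (-1)*x)))"
    using i0 i1 by (rule Bochner_Integration.integrable_add)
  then show ?thesis
  proof (rule Bochner_Integration.integrable_bound)
    show "w \<in> borel_measurable lebesgue"
      using cont_w by (rule cont_meas)
    show "AE x in lebesgue. norm (w x) \<le> norm (indicator {0::real..} x * exp (-(1/2)*x) +
        indicator {0::real..} (0 + (-1) * x) * exp (-(1/2)*(0 + (-1)*x)))"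
      by (intro AE_I2) (auto simp: w_def indicator_def)
  qed
qed

lemma w_integrable: "w integrable_on UNIV"
  using w_integrable_leb by (rule integrable_on_lebesgue)

lemma dom_int:
  assumes "continuous_on UNIV h" "\<And>x. \<bar>h x\<bar> \<le> C * w x"
  shows "h integrable_on UNIV"
proof (rule measurable_bounded_by_integrable_imp_integrable_real)
  show "h \<in> borel_measurable (lebesgue_on UNIV)"
    using assms(1) by (rule continuous_imp_measurable_on_sets_lebesgue) simp
  show "(\<lambda>x. C * w x) integrable_on UNIV"
    using integrable_on_cmult_left[OF w_integrable, of C] by simp
qed (use assms in auto)

lemma w_top: "(w \<longlongrightarrow> 0) at_top"
proof -
  have "filterlim (\<lambda>x::real. - \<bar>x\<bar> / 2) at_bot at_top"
    unfolding filterlim_at_bot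
  proof
    fix Z :: real
    show "\<forall>\<^sub>F x in at_top. - \<bar>x\<bar> / 2 \<le> Z"
      using eventually_ge_at_top[of "\<bar>2*Z\<bar>"] by eventually_elim auto
  qed
  from filterlim_compose[OF exp_at_bot this] show ?thesis unfolding w_def[abs_def] .
qed
lemma w_bot: "(w \<longlongrightarrow> 0) at_bot"
proof -
  have "filterlim (\<lambda>x::real. - \<bar>x\<bar> / 2) at_bot at_bot"
    unfolding filterlim_at_bot
  proof
    fix Z :: real
    show "\<forall>\<^sub>F x in at_bot. - \<bar>x\<bar> / 2 \<le> Z"
      using eventually_le_at_bot[of "- \<bar>2*Z\<bar>"] by eventually_elim auto
  qed
  from filterlim_compose[OF exp_at_bot this] show ?thesis unfolding w_def[abs_def] .
qed

lemma dom_top: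
  assumes "\<And>x. \<bar>h x\<bar> \<le> C * w x"
  shows "(h \<longlongrightarrow> 0) at_top" "(h \<longlongrightarrow> 0) at_bot"
proof -
  have le: "norm (h x) \<le> norm (w x) * C" for x
    using assms[of x] w_pos[of x] by (simp add: mult.commute)
  show "(h \<longlongrightarrow> 0) at_top" by (rule tendsto_0_le[OF w_top, of _ C]) (intro always_eventually allI le)
  show "(h \<longlongrightarrow> 0) at_bot" by (rule tendsto_0_le[OF w_bot, of _ C]) (intro always_eventually allI le)
qed

lemma int_deriv_zero:
  fixes F F' :: "real \<Rightarrow> real"
  assumes der: "\<And>x. (F has_real_derivative F' x) (at x)"
    and int: "F' integrable_on UNIV"
    and top: "(F \<longlongrightarrow> 0) at_top" and bot: "(F \<longlongrightarrow> 0) at_bot"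
  shows "integral UNIV F' = 0"
proof -
  let ?I = "integral UNIV F'"
  have hi: "(F' has_integral ?I) UNIV" using int by (simp add: integrable_integral)
  have ftc: "integral {-real n..real n} F' = F (real n) - F (- real n)" for n
  proof -
    have "(F' has_integral (F (real n) - F (- real n))) {-real n..real n}"
      by (rule fundamental_theorem_of_calculus)
        (auto intro: has_field_derivative_at_within der simp: has_real_derivative_iff_has_vector_derivative[symmetric])
    then show ?thesis by (rule integral_unique)
  qed
  have L1: "(\<lambda>n. F (real n) - F (- real n)) \<longlonglongrightarrow> ?I"
  proof (rule LIMSEQ_I)
    fix \<epsilon> :: real assume "\<epsilon> > 0"
    then obtain B where B: "B > 0" and HB: "\<forall>u v. ball 0 B \<subseteq> cbox u v \<longrightarrow>
        norm (integral (cbox u v) (\<lambda>x. if x \<in> UNIV then F' x else 0) - ?I) < \<epsilon>"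
      using hi[unfolded has_integral_alt'] by blast
    obtain N :: nat where N: "real N > B" using reals_Archimedean2 by blast
    show "\<exists>no. \<forall>n\<ge>no. norm (F (real n) - F (- real n) - ?I) < \<epsilon>"
    proof (intro exI allI impI)
      fix n assume "n \<ge> N"
      then have "real n > B" using N by linarith
      then have "ball 0 B \<subseteq> cbox (- real n) (real n)" by (auto simp: dist_real_def)
      then have "norm (integral (cbox (- real n) (real n)) F' - ?I) < \<epsilon>" using HB by simp
      then show "norm (F (real n) - F (- real n) - ?I) < \<epsilon>" using ftc[of n] by simp
    qed
  qed
  have "(\<lambda>n. F (real n)) \<longlonglongrightarrow> 0"
    using filterlim_compose[OF top filterlim_real_sequentially] by simp
  moreover have "(\<lambda>n. F (- real n)) \<longlonglongrightarrow> 0"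
  proof -
    have "filterlim (\<lambda>n. - real n) at_bot sequentially"
      using filterlim_real_sequentially by (simp add: filterlim_uminus_at_top)
    from filterlim_compose[OF bot this] show ?thesis by simp
  qed
  ultimately have "(\<lambda>n. F (real n) - F (- real n)) \<longlonglongrightarrow> 0"
    using tendsto_diff by fastforce
  then show ?thesis using L1 LIMSEQ_unique by blast
qed

lemma mvt_bound:
  fixes h h' :: "real \<Rightarrow> real"
  assumes der: "\<And>x. (h has_real_derivative h' x) (at x)"
    and bd: "\<And>x. min u v \<le> x \<Longrightarrow> x \<le> max u v \<Longrightarrow> \<bar>h' x\<bar> \<le> B"
  shows "\<bar>h u - h v\<bar> \<le> B * \<bar>u - v\<bar>"
proof (cases u v rule: linorder_cases)
  case less
  from MVT2[OF less der] obtain z where z: "u < z" "z < v" "h v - h u = (v - u) * h' z" by blast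
  have "\<bar>h' z\<bar> \<le> B" using bd z less by auto
  then have "\<bar>v - u\<bar> * \<bar>h' z\<bar> \<le> \<bar>v - u\<bar> * B" by (rule mult_left_mono) simp
  moreover have "\<bar>h u - h v\<bar> = \<bar>v - u\<bar> * \<bar>h' z\<bar>"
    using z(3) by (simp add: abs_minus_commute[of "h u"] abs_mult)
  ultimately show ?thesis by (simp add: abs_minus_commute mult.commute)
next
  case equal then show ?thesis by simp
next
  case greater
  from MVT2[OF greater der] obtain z where z: "v < z" "z < u" "h u - h v = (u - v) * h' z" by blast
  have "\<bar>h' z\<bar> \<le> B" using bd z greater by auto
  then have "\<bar>u - v\<bar> * \<bar>h' z\<bar> \<le> \<bar>u - v\<bar> * B" by (rule mult_left_mono) simp
  then show ?thesis using z by (simp add: abs_mult mult.commute)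
qed

lemma taylor_bound:
  fixes h h' :: "real \<Rightarrow> real"
  assumes der: "\<And>x. (h has_real_derivative h' x) (at x)"
    and lip: "\<And>x y. \<bar>h' x - h' y\<bar> \<le> L * \<bar>x - y\<bar>"
  shows "\<bar>h (u + t) - h u - t * h' u\<bar> \<le> L * t ^ 2"
proof -
  have d2: "((\<lambda>s. h s - s * h' u) has_real_derivative (h' x - h' u)) (at x)" for x
    by (auto intro!: derivative_eq_intros der)
  have "\<bar>(h (u + t) - (u + t) * h' u) - (h u - u * h' u)\<bar> \<le> (L * \<bar>t\<bar>) * \<bar>(u + t) - u\<bar>"
  proof (rule mvt_bound[OF d2])
    fix x assume "min (u + t) u \<le> x" "x \<le> max (u + t) u"
    then have "\<bar>x - u\<bar> \<le> \<bar>t\<bar>" by auto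
    moreover have "L \<ge> 0" using lip[of 1 0] by simp
    ultimately show "\<bar>h' x - h' u\<bar> \<le> L * \<bar>t\<bar>"
      using lip[of x u] by (meson mult_left_mono order_trans)
  qed
  then show ?thesis by (simp add: algebra_simps power2_eq_square abs_mult)
qed

definition K :: "real \<Rightarrow> real" where "K z = exp (- sqrt 2 * \<bar>z\<bar>)"

lemma K_pos: "K z > 0" by (simp add: K_def)
lemma cont_K: "continuous_on UNIV K" unfolding K_def by (intro continuous_intros)
lemma K_le_w: "K z \<le> w z"
proof -
  have "sqrt 2 \<ge> 1" by simp
  then have "1 * \<bar>z\<bar> \<le> sqrt 2 * \<bar>z\<bar>" by (rule mult_right_mono) simp
  then have "- sqrt 2 * \<bar>z\<bar> \<le> - \<bar>z\<bar> / 2" by simp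
  then show ?thesis unfolding K_def w_def by simp
qed
lemma K_int: "K integrable_on UNIV"
  by (rule dom_int[OF cont_K, of 1]) (use K_le_w K_pos in \<open>auto simp: abs_of_pos\<close>)

definition IK :: real where "IK = integral UNIV K"
lemma IK_nonneg: "IK \<ge> 0"
  unfolding IK_def by (rule integral_nonneg[OF K_int]) (simp add: K_pos less_imp_le)

definition conv :: "(real \<Rightarrow> real) \<Rightarrow> real \<Rightarrow> real" where
  "conv h x = integral UNIV (\<lambda>z. K z * h (x - z))"

lemma conv_int:
  assumes "continuous_on UNIV h" "\<And>u. \<bar>h u\<bar> \<le> M"
  shows "(\<lambda>z. K z * h (x - z)) integrable_on UNIV"
proof (rule dom_int[of _ M])
  show "continuous_on UNIV (\<lambda>z. K z * h (x - z))"
    by (intro continuous_intros cont_K continuous_on_compose2[OF assms(1)]) auto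
  fix z
  have "\<bar>K z * h (x - z)\<bar> = K z * \<bar>h (x - z)\<bar>" using K_pos[of z] by (simp add: abs_mult)
  also have "\<dots> \<le> K z * M" using assms(2) K_pos[of z] by (simp add: mult_left_mono)
  also have "\<dots> \<le> M * w z" using K_le_w[of z] assms(2)[of 0]
    by (simp add: mult.commute mult_left_mono)
  finally show "\<bar>K z * h (x - z)\<bar> \<le> M * w z" .
qed

lemma int_K_bound:
  assumes "F integrable_on UNIV" "\<And>z. \<bar>F z\<bar> \<le> K z * M"
  shows "\<bar>integral UNIV F\<bar> \<le> M * IK"
proof -
  have "norm (integral UNIV F) \<le> integral UNIV (\<lambda>z. K z * M)"
    by (rule integral_norm_bound_integral[OF assms(1)]) (use integrable_on_mult_left[OF K_int] assms(2) in auto)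
  also have "\<dots> = M * IK" unfolding IK_def by (simp add: mult.commute)
  finally show ?thesis by simp
qed

lemma conv_bound:
  assumes "continuous_on UNIV h" "\<And>u. \<bar>h u\<bar> \<le> M"
  shows "\<bar>conv h x\<bar> \<le> M * IK"
  unfolding conv_def
proof (rule int_K_bound[OF conv_int[OF assms]])
  fix z show "\<bar>K z * h (x - z)\<bar> \<le> K z * M"
    using assms(2) K_pos[of z] by (simp add: abs_mult mult_left_mono)
qed

lemma conv_lip:
  assumes "continuous_on UNIV h" "\<And>u. \<bar>h u\<bar> \<le> M" "\<And>u v. \<bar>h u - h v\<bar> \<le> L * \<bar>u - v\<bar>"
  shows "\<bar>conv h x - conv h y\<bar> \<le> (L * IK) * \<bar>x - y\<bar>"
proof -
  have "conv h x - conv h y = integral UNIV (\<lambda>z. K z * h (x - z) - K z * h (y - z))"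
    unfolding conv_def by (rule integral_diff[symmetric]) (intro conv_int[OF assms(1,2)])+
  also have "\<bar>\<dots>\<bar> \<le> (L * \<bar>x - y\<bar>) * IK"
  proof (rule int_K_bound)
    show "(\<lambda>z. K z * h (x - z) - K z * h (y - z)) integrable_on UNIV"
      by (intro integrable_diff conv_int[OF assms(1,2)])
    fix z
    have "\<bar>K z * h (x - z) - K z * h (y - z)\<bar> = K z * \<bar>h (x - z) - h (y - z)\<bar>"
      using K_pos[of z] by (simp add: abs_mult right_diff_distrib[symmetric])
    also have "\<dots> \<le> K z * (L * \<bar>x - y\<bar>)"
      using assms(3)[of "x - z" "y - z"] K_pos[of z] by (simp add: mult_left_mono)
    finally show "\<bar>K z * h (x - z) - K z * h (y - z)\<bar> \<le> K z * (L * \<bar>x - y\<bar>)" .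
  qed
  finally show ?thesis by (simp only: mult_ac)
qed

lemma conv_cont:
  assumes "continuous_on UNIV h" "\<And>u. \<bar>h u\<bar> \<le> M" "\<And>u v. \<bar>h u - h v\<bar> \<le> L * \<bar>u - v\<bar>"
  shows "continuous_on UNIV (conv h)"
proof -
  have L: "L \<ge> 0" using assms(3)[of 1 0] by simp
  have "(L * IK)-lipschitz_on UNIV (conv h)"
  proof (rule lipschitz_onI)
    fix u v :: real
    show "dist (conv h u) (conv h v) \<le> (L * IK) * dist u v"
      using conv_lip[OF assms, of u v] by (simp add: dist_real_def)
    show "0 \<le> L * IK" using L IK_nonneg by simp
  qed
  then show ?thesis by (rule lipschitz_on_continuous_on)
qed

lemma conv_deriv:
  assumes hc: "continuous_on UNIV h" and hb: "\<And>u. \<bar>h u\<bar> \<le> M"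
    and der: "\<And>u. (h has_real_derivative h' u) (at u)"
    and h'c: "continuous_on UNIV h'" and h'b: "\<And>u. \<bar>h' u\<bar> \<le> M'"
    and lip: "\<And>u v. \<bar>h' u - h' v\<bar> \<le> L * \<bar>u - v\<bar>"
  shows "(conv h has_real_derivative conv h' x) (at x)"
proof -
  have L: "L \<ge> 0" using lip[of 1 0] by simp
  have key: "\<bar>conv h (x + t) - conv h x - t * conv h' x\<bar> \<le> (L * t ^ 2) * IK" for t
  proof -
    have "conv h (x + t) - conv h x - t * conv h' x =
      integral UNIV (\<lambda>z. K z * h (x + t - z) - K z * h (x - z) - t * (K z * h' (x - z)))"
      unfolding conv_def
      using conv_int[OF hc hb, of "x + t"] conv_int[OF hc hb, of x] conv_int[OF h'c h'b, of x]
      by (simp add: integral_diff integrable_diff integrable_on_mult_right)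
    also have "\<bar>\<dots>\<bar> \<le> (L * t ^ 2) * IK"
    proof (rule int_K_bound)
      show "(\<lambda>z. K z * h (x + t - z) - K z * h (x - z) - t * (K z * h' (x - z))) integrable_on UNIV"
        by (intro integrable_diff conv_int[OF hc hb] integrable_on_mult_right conv_int[OF h'c h'b])
      fix z
      have "\<bar>K z * h (x + t - z) - K z * h (x - z) - t * (K z * h' (x - z))\<bar>
          = K z * \<bar>h ((x - z) + t) - h (x - z) - t * h' (x - z)\<bar>"
      proof -
        have "x + t - z = (x - z) + t" by simp
        then have "K z * h (x + t - z) - K z * h (x - z) - t * (K z * h' (x - z))
          = K z * (h ((x - z) + t) - h (x - z) - t * h' (x - z))" by (simp add: algebra_simps)
        then show ?thesis using K_pos[of z] by (simp add: abs_mult)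
      qed
      also have "\<dots> \<le> K z * (L * t ^ 2)"
        using taylor_bound[OF der lip, of "x - z" t] K_pos[of z] by (simp add: mult_left_mono)
      finally show "\<bar>K z * h (x + t - z) - K z * h (x - z) - t * (K z * h' (x - z))\<bar> \<le> K z * (L * t ^ 2)" .
    qed
    finally show ?thesis .
  qed
  have "((\<lambda>t. (conv h (x + t) - conv h x) / t - conv h' x) \<longlongrightarrow> 0) (at 0)"
  proof (rule tendsto_0_le[of "\<lambda>t. t" _ _ "L * IK"])
    show "((\<lambda>t::real. t) \<longlongrightarrow> 0) (at 0)" by (rule tendsto_ident_at)
    show "\<forall>\<^sub>F t in at 0. norm ((conv h (x + t) - conv h x) / t - conv h' x) \<le> norm t * (L * IK)"
      unfolding eventually_at_filter
    proof (intro always_eventually allI impI)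
      fix t :: real assume "t \<noteq> 0"
      then have "(conv h (x + t) - conv h x) / t - conv h' x = (conv h (x + t) - conv h x - t * conv h' x) / t"
        by (simp add: field_simps)
      also have "\<bar>\<dots>\<bar> \<le> (L * t ^ 2) * IK / \<bar>t\<bar>"
        using key[of t] \<open>t \<noteq> 0\<close> by (simp add: abs_div divide_right_mono)
      also have "\<dots> = \<bar>t\<bar> * (L * IK)" using \<open>t \<noteq> 0\<close>
        by (cases "t > 0") (simp_all add: power2_eq_square field_simps)
      finally show "norm ((conv h (x + t) - conv h x) / t - conv h' x) \<le> norm t * (L * IK)" by simp
    qed
  qed
  then show ?thesis unfolding DERIV_def by (rule LIM_zero_cancel)
qed

lemma cosh_ne0: "cosh (y::real) \<noteq> 0"
  using cosh_real_pos[of y] by linarith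

lemma continuous_on_sech [continuous_intros]:
  "continuous_on S h \<Longrightarrow> continuous_on S (\<lambda>x. sech (h x))"
  unfolding sech_def by (intro continuous_intros) (auto simp: cosh_ne0)

lemma continuous_on_tanh_real [continuous_intros]:
  "continuous_on S h \<Longrightarrow> continuous_on S (\<lambda>x. tanh (h x :: real))"
  by (intro continuous_intros) (auto simp: cosh_ne0)

lemma D_sechk: "((\<lambda>y. sech y ^ n) has_real_derivative (- real n * sech x ^ n * tanh x)) (at x)"
proof -
  have d: "((\<lambda>y. sech y ^ n) has_real_derivative (real n * sech x ^ (n - Suc 0) * (- sech x * tanh x))) (at x)"
    by (rule DERIV_chain2[OF DERIV_pow D_sech])
  have e: "real n * sech x ^ (n - Suc 0) * (- sech x * tanh x) = - real n * sech x ^ n * tanh x"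
  proof (cases n)
    case (Suc m) then show ?thesis by (simp add: algebra_simps)
  qed simp
  show ?thesis using d unfolding e .
qed

definition g :: "real \<Rightarrow> real" where "g y = sech y ^ 2"
definition g1 :: "real \<Rightarrow> real" where "g1 y = - 2 * sech y ^ 2 * tanh y"
definition g2 :: "real \<Rightarrow> real" where "g2 y = 4 * sech y ^ 2 * tanh y ^ 2 - 2 * sech y ^ 4"

lemma D_g: "(g has_real_derivative g1 x) (at x)"
  using D_sechk[of 2 x] unfolding g_def[abs_def] g1_def by simp
lemma D_g1: "(g1 has_real_derivative g2 x) (at x)"
proof -
  have "((\<lambda>y. - 2 * (g y * tanh y)) has_real_derivative (- 2 * (g1 x * tanh x + sech x ^ 2 * g x))) (at x)"
    by (rule DERIV_cmult[OF DERIV_mult[OF D_g D_tanh]])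
  moreover have "(\<lambda>y. - 2 * (g y * tanh y)) = g1" by (auto simp: g_def g1_def)
  moreover have "- 2 * (g1 x * tanh x + sech x ^ 2 * g x) = g2 x"
    by (simp add: g_def g1_def g2_def algebra_simps power2_eq_square power4_eq_xxxx)
  ultimately show ?thesis by simp
qed

lemma cont_g: "continuous_on UNIV g" unfolding g_def[abs_def] by (intro continuous_intros)
lemma cont_g1: "continuous_on UNIV g1" unfolding g1_def[abs_def] by (intro continuous_intros)

lemma sech_abs_le1: "\<bar>sech x\<bar> \<le> 1" using sech_le1[of x] sech_pos[of x] by simp

lemma g_bd: "\<bar>g x\<bar> \<le> 1"
  unfolding g_def using sech_abs_le1[of x] by (simp add: abs_square_le_1)
lemma g1_bd: "\<bar>g1 x\<bar> \<le> 2"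
proof -
  have "\<bar>sech x ^ 2\<bar> \<le> 1" using g_bd unfolding g_def .
  moreover have "\<bar>tanh x\<bar> \<le> 1" by (rule abs_tanh_le)
  ultimately have "\<bar>sech x ^ 2\<bar> * \<bar>tanh x\<bar> \<le> 1" by (simp add: mult_le_one)
  then show ?thesis unfolding g1_def by (simp add: abs_mult)
qed
lemma g2_bd: "\<bar>g2 x\<bar> \<le> 6"
proof -
  have s: "\<bar>sech x\<bar> \<le> 1" by (rule sech_abs_le1)
  have t: "\<bar>tanh x\<bar> \<le> 1" by (rule abs_tanh_le)
  have s2: "sech x ^ 2 \<le> 1" "tanh x ^ 2 \<le> 1" using s t by (simp_all add: abs_square_le_1)
  have "sech x ^ 2 * tanh x ^ 2 \<le> 1" by (rule mult_le_one[OF s2(1) _ s2(2)]) simp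
  then have "\<bar>sech x ^ 2 * tanh x ^ 2\<bar> \<le> 1" by simp
  moreover have "sech x ^ 4 = sech x ^ 2 * sech x ^ 2" by simp
  then have "\<bar>sech x ^ 4\<bar> \<le> 1" using mult_le_one[OF s2(1) _ s2(1)] by simp
  ultimately have h1: "4 * sech x ^ 2 * tanh x ^ 2 \<le> 4" "2 * sech x ^ 4 \<le> 2" by simp_all
  have h2: "0 \<le> 4 * sech x ^ 2 * tanh x ^ 2" "0 \<le> 2 * sech x ^ 4" by simp_all
  show ?thesis unfolding g2_def abs_le_iff using h1 h2 by linarith
qed

lemma g1_lip: "\<bar>g1 u - g1 v\<bar> \<le> 6 * \<bar>u - v\<bar>"
  by (rule mvt_bound[OF D_g1 g2_bd])

lemma T_conv: "T x = conv g x"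
proof -
  define F where "F y = exp (- sqrt 2 * \<bar>x - y\<bar>) * sech y ^ 2" for y
  have contF: "continuous_on UNIV F" unfolding F_def[abs_def] by (intro continuous_intros)
  have intF: "integrable lebesgue F"
  proof (rule Bochner_Integration.integrable_bound)
    show "integrable lebesgue (\<lambda>y. 4 * w y)" using w_integrable_leb by simp
    show "F \<in> borel_measurable lebesgue" using contF by (rule cont_meas)
    show "AE y in lebesgue. norm (F y) \<le> norm (4 * w y)"
    proof (intro AE_I2)
      fix y
      have "exp (- sqrt 2 * \<bar>x - y\<bar>) \<le> 1" by simp
      moreover have "sech y ^ 2 \<le> sech y" using sech_le1[of y] sech_pos[of y]
        by (simp add: power2_eq_square mult_le_cancel_right1)
      moreover have "sech y \<le> (1 + \<bar>y\<bar>) * sech y" using sech_pos[of y]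
        by (simp add: distrib_right)
      moreover have "F y \<le> 1 * sech y ^ 2" unfolding F_def
        by (rule mult_right_mono) simp_all
      ultimately have "F y \<le> 4 * w y" using weight_bound[of y] by linarith
      moreover have "F y \<ge> 0" unfolding F_def by simp
      ultimately show "norm (F y) \<le> norm (4 * w y)" using w_pos[of y] by simp
    qed
  qed
  have eq: "F (x + (-1) * z) = K z * g (x - z)" for z
    unfolding F_def K_def g_def by simp
  have intF2: "integrable lebesgue (\<lambda>z. F (x + (-1) * z))"
    using lebesgue_integrable_real_affine_iff[of "-1" F x] intF by simp
  have "T x = integral UNIV F" unfolding T_def F_def ..
  also have "\<dots> = (\<integral>y. F y \<partial>lebesgue)" using intF by (rule integral_lebesgue)
  also have "\<dots> = (\<integral>z. F (x + (-1) * z) \<partial>lebesgue)"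
    using lebesgue_integral_real_affine[of "-1" F x] by simp
  also have "\<dots> = integral UNIV (\<lambda>z. F (x + (-1) * z))" using intF2 by (rule integral_lebesgue[symmetric])
  also have "\<dots> = conv g x" unfolding conv_def eq ..
  finally show ?thesis .
qed

lemma T_eq: "T = conv g" using T_conv by auto

lemma T_deriv: "(T has_real_derivative conv g1 x) (at x)"
  unfolding T_eq
  by (rule conv_deriv[OF cont_g g_bd D_g cont_g1 g1_bd g1_lip])

lemma deriv_T: "deriv T x = conv g1 x" using T_deriv by (rule DERIV_imp_deriv)
lemma deriv_T_eq: "deriv T = conv g1" using deriv_T by auto

lemma cont_T: "continuous_on UNIV T"
  by (rule continuous_at_imp_continuous_on) (use T_deriv DERIV_isCont in blast)
lemma cont_dT: "continuous_on UNIV (deriv T)"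
  unfolding deriv_T_eq by (rule conv_cont[OF cont_g1 g1_bd g1_lip])

lemma T_bd: "\<bar>T x\<bar> \<le> IK"
  unfolding T_eq using conv_bound[OF cont_g g_bd, of x] by simp
lemma dT_bd: "\<bar>deriv T x\<bar> \<le> 2 * IK"
  unfolding deriv_T_eq by (rule conv_bound[OF cont_g1 g1_bd])

lemma abs_mult_le: "\<bar>u1\<bar> \<le> v1 \<Longrightarrow> \<bar>u2\<bar> \<le> v2 \<Longrightarrow> \<bar>u1 * u2\<bar> \<le> v1 * (v2::real)"
  by (simp add: abs_mult mult_mono')

lemma sk_bd: "1 \<le> n \<Longrightarrow> \<bar>sech x ^ n\<bar> \<le> sech x"
proof -
  assume "1 \<le> n"
  then obtain m where n: "n = Suc m" by (cases n) auto
  have "sech x ^ m \<le> 1" using sech_le1[of x] sech_pos[of x] by (simp add: power_le_one)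
  then have "sech x * sech x ^ m \<le> sech x * 1" using sech_pos[of x] by (intro mult_left_mono) auto
  then show ?thesis using n sech_pos[of x] by (simp add: abs_mult)
qed

lemma sech_ne0 [simp]: "sech x \<noteq> 0" using sech_pos[of x] by linarith

lemma x_bd: "\<bar>x\<bar> \<le> 1 + \<bar>x::real\<bar>" by simp
lemma lns_bd: "\<bar>ln (sech x)\<bar> \<le> 1 + \<bar>x\<bar>" using ln_sech_abs[of x] by simp

lemma fin_s: "\<bar>y\<bar> \<le> sech x * M \<Longrightarrow> 0 \<le> M \<Longrightarrow> \<bar>y\<bar> \<le> M * ((1 + \<bar>x\<bar>) * sech x)"
proof -
  assume h: "\<bar>y\<bar> \<le> sech x * M" "0 \<le> M"
  have "sech x * M \<le> ((1 + \<bar>x\<bar>) * sech x) * M"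
    using sech_pos[of x] h(2) by (intro mult_right_mono) (auto simp: distrib_right)
  then show ?thesis using h(1) by (simp add: mult.commute)
qed
lemma fin_x: "\<bar>y\<bar> \<le> sech x * (1 + \<bar>x\<bar>) \<Longrightarrow> \<bar>y\<bar> \<le> 1 * ((1 + \<bar>x\<bar>) * sech x)"
  by (simp add: mult.commute)

lemma dom2:
  assumes "continuous_on UNIV h" "\<And>x. \<bar>h x\<bar> \<le> M * ((1 + \<bar>x\<bar>) * sech x)"
  shows "h integrable_on UNIV" "(h \<longlongrightarrow> 0) at_top" "(h \<longlongrightarrow> 0) at_bot"
proof -
  have M: "M \<ge> 0"
  proof -
    have "0 \<le> M * ((1 + \<bar>0::real\<bar>) * sech 0)" using assms(2)[of 0] by linarith
    then show ?thesis using sech_pos[of 0] by (simp add: zero_le_mult_iff)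
  qed
  have b: "\<bar>h x\<bar> \<le> (4 * M) * w x" for x
  proof -
    have "M * ((1 + \<bar>x\<bar>) * sech x) \<le> M * (4 * w x)"
      by (rule mult_left_mono[OF weight_bound M])
    then show ?thesis using assms(2)[of x] by simp
  qed
  show "h integrable_on UNIV" by (rule dom_int[OF assms(1) b])
  show "(h \<longlongrightarrow> 0) at_top" "(h \<longlongrightarrow> 0) at_bot" using dom_top[OF b] by auto
qed

lemma DT: "(T has_real_derivative deriv T x) (at x)"
  using T_deriv[of x] deriv_T[of x] by simp

lemma I_ip:
  assumes "1 \<le> n"
  shows "(\<lambda>x. sech x ^ n * cos x) integrable_on UNIV" "((\<lambda>x. sech x ^ n * cos x) \<longlongrightarrow> 0) at_top" "((\<lambda>x. sech x ^ n * cos x) \<longlongrightarrow> 0) at_bot"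
proof -
  have c: "continuous_on UNIV (\<lambda>x. sech x ^ n * cos x)" by (intro continuous_intros cont_T cont_dT continuous_on_compose2[OF cont_T] continuous_on_compose2[OF cont_dT]; auto)
  have bd: "\<bar>sech x ^ n * cos x\<bar> \<le> 1 * ((1 + \<bar>x\<bar>) * sech x)" for x
  proof -
    have "\<bar>sech x ^ n * cos x\<bar> \<le> sech x * 1" by (intro abs_mult_le sk_bd assms abs_tanh_le abs_cos_le_one abs_sin_le_one x_bd lns_bd T_bd dT_bd)
    then show ?thesis by (intro fin_s; simp_all add: IK_nonneg)
  qed
  show "(\<lambda>x. sech x ^ n * cos x) integrable_on UNIV" "((\<lambda>x. sech x ^ n * cos x) \<longlongrightarrow> 0) at_top" "((\<lambda>x. sech x ^ n * cos x) \<longlongrightarrow> 0) at_bot"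
    using dom2[OF c bd] by auto
qed

lemma I_iq:
  assumes "1 \<le> n"
  shows "(\<lambda>x. sech x ^ n * ln (sech x) * cos x) integrable_on UNIV" "((\<lambda>x. sech x ^ n * ln (sech x) * cos x) \<longlongrightarrow> 0) at_top" "((\<lambda>x. sech x ^ n * ln (sech x) * cos x) \<longlongrightarrow> 0) at_bot"
proof -
  have c: "continuous_on UNIV (\<lambda>x. sech x ^ n * ln (sech x) * cos x)" by (intro continuous_intros cont_T cont_dT continuous_on_compose2[OF cont_T] continuous_on_compose2[OF cont_dT]; auto)
  have bd: "\<bar>sech x ^ n * ln (sech x) * cos x\<bar> \<le> 1 * ((1 + \<bar>x\<bar>) * sech x)" for x
  proof -
    have "\<bar>sech x ^ n * ln (sech x) * cos x\<bar> \<le> sech x * (1 + \<bar>x\<bar>) * 1" by (intro abs_mult_le sk_bd assms abs_tanh_le abs_cos_le_one abs_sin_le_one x_bd lns_bd T_bd dT_bd)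
    then show ?thesis by (intro fin_x; simp_all add: IK_nonneg)
  qed
  show "(\<lambda>x. sech x ^ n * ln (sech x) * cos x) integrable_on UNIV" "((\<lambda>x. sech x ^ n * ln (sech x) * cos x) \<longlongrightarrow> 0) at_top" "((\<lambda>x. sech x ^ n * ln (sech x) * cos x) \<longlongrightarrow> 0) at_bot"
    using dom2[OF c bd] by auto
qed

lemma I_ir:
  assumes "1 \<le> n"
  shows "(\<lambda>x. sech x ^ n * T x * cos x) integrable_on UNIV" "((\<lambda>x. sech x ^ n * T x * cos x) \<longlongrightarrow> 0) at_top" "((\<lambda>x. sech x ^ n * T x * cos x) \<longlongrightarrow> 0) at_bot"
proof -
  have c: "continuous_on UNIV (\<lambda>x. sech x ^ n * T x * cos x)" by (intro continuous_intros cont_T cont_dT continuous_on_compose2[OF cont_T] continuous_on_compose2[OF cont_dT]; auto)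
  have bd: "\<bar>sech x ^ n * T x * cos x\<bar> \<le> IK * ((1 + \<bar>x\<bar>) * sech x)" for x
  proof -
    have "\<bar>sech x ^ n * T x * cos x\<bar> \<le> sech x * IK * 1" by (intro abs_mult_le sk_bd assms abs_tanh_le abs_cos_le_one abs_sin_le_one x_bd lns_bd T_bd dT_bd)
    then show ?thesis by (intro fin_s; simp_all add: IK_nonneg)
  qed
  show "(\<lambda>x. sech x ^ n * T x * cos x) integrable_on UNIV" "((\<lambda>x. sech x ^ n * T x * cos x) \<longlongrightarrow> 0) at_top" "((\<lambda>x. sech x ^ n * T x * cos x) \<longlongrightarrow> 0) at_bot"
    using dom2[OF c bd] by auto
qed

lemma I_is:
  assumes "1 \<le> n"
  shows "(\<lambda>x. sech x ^ n * T x * tanh x * sin x) integrable_on UNIV" "((\<lambda>x. sech x ^ n * T x * tanh x * sin x) \<longlongrightarrow> 0) at_top" "((\<lambda>x. sech x ^ n * T x * tanh x * sin x) \<longlongrightarrow> 0) at_bot"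
proof -
  have c: "continuous_on UNIV (\<lambda>x. sech x ^ n * T x * tanh x * sin x)" by (intro continuous_intros cont_T cont_dT continuous_on_compose2[OF cont_T] continuous_on_compose2[OF cont_dT]; auto)
  have bd: "\<bar>sech x ^ n * T x * tanh x * sin x\<bar> \<le> IK * ((1 + \<bar>x\<bar>) * sech x)" for x
  proof -
    have "\<bar>sech x ^ n * T x * tanh x * sin x\<bar> \<le> sech x * IK * 1 * 1" by (intro abs_mult_le sk_bd assms abs_tanh_le abs_cos_le_one abs_sin_le_one x_bd lns_bd T_bd dT_bd)
    then show ?thesis by (intro fin_s; simp_all add: IK_nonneg)
  qed
  show "(\<lambda>x. sech x ^ n * T x * tanh x * sin x) integrable_on UNIV" "((\<lambda>x. sech x ^ n * T x * tanh x * sin x) \<longlongrightarrow> 0) at_top" "((\<lambda>x. sech x ^ n * T x * tanh x * sin x) \<longlongrightarrow> 0) at_bot"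
    using dom2[OF c bd] by auto
qed

lemma I_ia:
  assumes "1 \<le> n"
  shows "(\<lambda>x. x * sech x ^ n * tanh x * cos x) integrable_on UNIV" "((\<lambda>x. x * sech x ^ n * tanh x * cos x) \<longlongrightarrow> 0) at_top" "((\<lambda>x. x * sech x ^ n * tanh x * cos x) \<longlongrightarrow> 0) at_bot"
proof -
  have c: "continuous_on UNIV (\<lambda>x. x * sech x ^ n * tanh x * cos x)" by (intro continuous_intros cont_T cont_dT continuous_on_compose2[OF cont_T] continuous_on_compose2[OF cont_dT]; auto)
  have bd: "\<bar>x * sech x ^ n * tanh x * cos x\<bar> \<le> 1 * ((1 + \<bar>x\<bar>) * sech x)" for x
  proof -
    have "\<bar>x * sech x ^ n * tanh x * cos x\<bar> \<le> (1 + \<bar>x\<bar>) * sech x * 1 * 1" by (intro abs_mult_le sk_bd assms abs_tanh_le abs_cos_le_one abs_sin_le_one x_bd lns_bd T_bd dT_bd)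
    then show ?thesis by (simp add: mult.commute; simp_all add: IK_nonneg)
  qed
  show "(\<lambda>x. x * sech x ^ n * tanh x * cos x) integrable_on UNIV" "((\<lambda>x. x * sech x ^ n * tanh x * cos x) \<longlongrightarrow> 0) at_top" "((\<lambda>x. x * sech x ^ n * tanh x * cos x) \<longlongrightarrow> 0) at_bot"
    using dom2[OF c bd] by auto
qed

lemma I_ib:
  assumes "1 \<le> n"
  shows "(\<lambda>x. sech x ^ n * tanh x * sin x) integrable_on UNIV" "((\<lambda>x. sech x ^ n * tanh x * sin x) \<longlongrightarrow> 0) at_top" "((\<lambda>x. sech x ^ n * tanh x * sin x) \<longlongrightarrow> 0) at_bot"
proof -
  have c: "continuous_on UNIV (\<lambda>x. sech x ^ n * tanh x * sin x)" by (intro continuous_intros cont_T cont_dT continuous_on_compose2[OF cont_T] continuous_on_compose2[OF cont_dT]; auto)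
  have bd: "\<bar>sech x ^ n * tanh x * sin x\<bar> \<le> 1 * ((1 + \<bar>x\<bar>) * sech x)" for x
  proof -
    have "\<bar>sech x ^ n * tanh x * sin x\<bar> \<le> sech x * 1 * 1" by (intro abs_mult_le sk_bd assms abs_tanh_le abs_cos_le_one abs_sin_le_one x_bd lns_bd T_bd dT_bd)
    then show ?thesis by (intro fin_s; simp_all add: IK_nonneg)
  qed
  show "(\<lambda>x. sech x ^ n * tanh x * sin x) integrable_on UNIV" "((\<lambda>x. sech x ^ n * tanh x * sin x) \<longlongrightarrow> 0) at_top" "((\<lambda>x. sech x ^ n * tanh x * sin x) \<longlongrightarrow> 0) at_bot"
    using dom2[OF c bd] by auto
qed

lemma I_ic:
  assumes "1 \<le> n"
  shows "(\<lambda>x. sech x ^ n * ln (sech x) * tanh x * sin x) integrable_on UNIV" "((\<lambda>x. sech x ^ n * ln (sech x) * tanh x * sin x) \<longlongrightarrow> 0) at_top" "((\<lambda>x. sech x ^ n * ln (sech x) * tanh x * sin x) \<longlongrightarrow> 0) at_bot"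
proof -
  have c: "continuous_on UNIV (\<lambda>x. sech x ^ n * ln (sech x) * tanh x * sin x)" by (intro continuous_intros cont_T cont_dT continuous_on_compose2[OF cont_T] continuous_on_compose2[OF cont_dT]; auto)
  have bd: "\<bar>sech x ^ n * ln (sech x) * tanh x * sin x\<bar> \<le> 1 * ((1 + \<bar>x\<bar>) * sech x)" for x
  proof -
    have "\<bar>sech x ^ n * ln (sech x) * tanh x * sin x\<bar> \<le> sech x * (1 + \<bar>x\<bar>) * 1 * 1" by (intro abs_mult_le sk_bd assms abs_tanh_le abs_cos_le_one abs_sin_le_one x_bd lns_bd T_bd dT_bd)
    then show ?thesis by (intro fin_x; simp_all add: IK_nonneg)
  qed
  show "(\<lambda>x. sech x ^ n * ln (sech x) * tanh x * sin x) integrable_on UNIV" "((\<lambda>x. sech x ^ n * ln (sech x) * tanh x * sin x) \<longlongrightarrow> 0) at_top" "((\<lambda>x. sech x ^ n * ln (sech x) * tanh x * sin x) \<longlongrightarrow> 0) at_bot"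
    using dom2[OF c bd] by auto
qed

lemma I_id:
  assumes "1 \<le> n"
  shows "(\<lambda>x. x * sech x ^ n * sin x) integrable_on UNIV" "((\<lambda>x. x * sech x ^ n * sin x) \<longlongrightarrow> 0) at_top" "((\<lambda>x. x * sech x ^ n * sin x) \<longlongrightarrow> 0) at_bot"
proof -
  have c: "continuous_on UNIV (\<lambda>x. x * sech x ^ n * sin x)" by (intro continuous_intros cont_T cont_dT continuous_on_compose2[OF cont_T] continuous_on_compose2[OF cont_dT]; auto)
  have bd: "\<bar>x * sech x ^ n * sin x\<bar> \<le> 1 * ((1 + \<bar>x\<bar>) * sech x)" for x
  proof -
    have "\<bar>x * sech x ^ n * sin x\<bar> \<le> (1 + \<bar>x\<bar>) * sech x * 1" by (intro abs_mult_le sk_bd assms abs_tanh_le abs_cos_le_one abs_sin_le_one x_bd lns_bd T_bd dT_bd)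
    then show ?thesis by (simp add: mult.commute; simp_all add: IK_nonneg)
  qed
  show "(\<lambda>x. x * sech x ^ n * sin x) integrable_on UNIV" "((\<lambda>x. x * sech x ^ n * sin x) \<longlongrightarrow> 0) at_top" "((\<lambda>x. x * sech x ^ n * sin x) \<longlongrightarrow> 0) at_bot"
    using dom2[OF c bd] by auto
qed

lemma I_ie:
  assumes "1 \<le> n"
  shows "(\<lambda>x. sech x ^ n * tanh x * deriv T x * cos x) integrable_on UNIV" "((\<lambda>x. sech x ^ n * tanh x * deriv T x * cos x) \<longlongrightarrow> 0) at_top" "((\<lambda>x. sech x ^ n * tanh x * deriv T x * cos x) \<longlongrightarrow> 0) at_bot"
proof -
  have c: "continuous_on UNIV (\<lambda>x. sech x ^ n * tanh x * deriv T x * cos x)" by (intro continuous_intros cont_T cont_dT continuous_on_compose2[OF cont_T] continuous_on_compose2[OF cont_dT]; auto)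
  have bd: "\<bar>sech x ^ n * tanh x * deriv T x * cos x\<bar> \<le> (2 * IK) * ((1 + \<bar>x\<bar>) * sech x)" for x
  proof -
    have "\<bar>sech x ^ n * tanh x * deriv T x * cos x\<bar> \<le> sech x * 1 * (2 * IK) * 1" by (intro abs_mult_le sk_bd assms abs_tanh_le abs_cos_le_one abs_sin_le_one x_bd lns_bd T_bd dT_bd)
    then show ?thesis by (intro fin_s; simp_all add: IK_nonneg)
  qed
  show "(\<lambda>x. sech x ^ n * tanh x * deriv T x * cos x) integrable_on UNIV" "((\<lambda>x. sech x ^ n * tanh x * deriv T x * cos x) \<longlongrightarrow> 0) at_top" "((\<lambda>x. sech x ^ n * tanh x * deriv T x * cos x) \<longlongrightarrow> 0) at_bot"
    using dom2[OF c bd] by auto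
qed

lemma I_if:
  assumes "1 \<le> n"
  shows "(\<lambda>x. sech x ^ n * deriv T x * sin x) integrable_on UNIV" "((\<lambda>x. sech x ^ n * deriv T x * sin x) \<longlongrightarrow> 0) at_top" "((\<lambda>x. sech x ^ n * deriv T x * sin x) \<longlongrightarrow> 0) at_bot"
proof -
  have c: "continuous_on UNIV (\<lambda>x. sech x ^ n * deriv T x * sin x)" by (intro continuous_intros cont_T cont_dT continuous_on_compose2[OF cont_T] continuous_on_compose2[OF cont_dT]; auto)
  have bd: "\<bar>sech x ^ n * deriv T x * sin x\<bar> \<le> (2 * IK) * ((1 + \<bar>x\<bar>) * sech x)" for x
  proof -
    have "\<bar>sech x ^ n * deriv T x * sin x\<bar> \<le> sech x * (2 * IK) * 1" by (intro abs_mult_le sk_bd assms abs_tanh_le abs_cos_le_one abs_sin_le_one x_bd lns_bd T_bd dT_bd)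
    then show ?thesis by (intro fin_s; simp_all add: IK_nonneg)
  qed
  show "(\<lambda>x. sech x ^ n * deriv T x * sin x) integrable_on UNIV" "((\<lambda>x. sech x ^ n * deriv T x * sin x) \<longlongrightarrow> 0) at_top" "((\<lambda>x. sech x ^ n * deriv T x * sin x) \<longlongrightarrow> 0) at_bot"
    using dom2[OF c bd] by auto
qed

lemma I_Fb:
  assumes "1 \<le> n"
  shows "(\<lambda>x. sech x ^ n * tanh x * cos x) integrable_on UNIV" "((\<lambda>x. sech x ^ n * tanh x * cos x) \<longlongrightarrow> 0) at_top" "((\<lambda>x. sech x ^ n * tanh x * cos x) \<longlongrightarrow> 0) at_bot"
proof -
  have c: "continuous_on UNIV (\<lambda>x. sech x ^ n * tanh x * cos x)" by (intro continuous_intros cont_T cont_dT continuous_on_compose2[OF cont_T] continuous_on_compose2[OF cont_dT]; auto)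
  have bd: "\<bar>sech x ^ n * tanh x * cos x\<bar> \<le> 1 * ((1 + \<bar>x\<bar>) * sech x)" for x
  proof -
    have "\<bar>sech x ^ n * tanh x * cos x\<bar> \<le> sech x * 1 * 1" by (intro abs_mult_le sk_bd assms abs_tanh_le abs_cos_le_one abs_sin_le_one x_bd lns_bd T_bd dT_bd)
    then show ?thesis by (intro fin_s; simp_all add: IK_nonneg)
  qed
  show "(\<lambda>x. sech x ^ n * tanh x * cos x) integrable_on UNIV" "((\<lambda>x. sech x ^ n * tanh x * cos x) \<longlongrightarrow> 0) at_top" "((\<lambda>x. sech x ^ n * tanh x * cos x) \<longlongrightarrow> 0) at_bot"
    using dom2[OF c bd] by auto
qed

lemma I_Fc:
  assumes "1 \<le> n"
  shows "(\<lambda>x. sech x ^ n * ln (sech x) * tanh x * cos x) integrable_on UNIV" "((\<lambda>x. sech x ^ n * ln (sech x) * tanh x * cos x) \<longlongrightarrow> 0) at_top" "((\<lambda>x. sech x ^ n * ln (sech x) * tanh x * cos x) \<longlongrightarrow> 0) at_bot"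
proof -
  have c: "continuous_on UNIV (\<lambda>x. sech x ^ n * ln (sech x) * tanh x * cos x)" by (intro continuous_intros cont_T cont_dT continuous_on_compose2[OF cont_T] continuous_on_compose2[OF cont_dT]; auto)
  have bd: "\<bar>sech x ^ n * ln (sech x) * tanh x * cos x\<bar> \<le> 1 * ((1 + \<bar>x\<bar>) * sech x)" for x
  proof -
    have "\<bar>sech x ^ n * ln (sech x) * tanh x * cos x\<bar> \<le> sech x * (1 + \<bar>x\<bar>) * 1 * 1" by (intro abs_mult_le sk_bd assms abs_tanh_le abs_cos_le_one abs_sin_le_one x_bd lns_bd T_bd dT_bd)
    then show ?thesis by (intro fin_x; simp_all add: IK_nonneg)
  qed
  show "(\<lambda>x. sech x ^ n * ln (sech x) * tanh x * cos x) integrable_on UNIV" "((\<lambda>x. sech x ^ n * ln (sech x) * tanh x * cos x) \<longlongrightarrow> 0) at_top" "((\<lambda>x. sech x ^ n * ln (sech x) * tanh x * cos x) \<longlongrightarrow> 0) at_bot"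
    using dom2[OF c bd] by auto
qed

lemma I_Fd:
  assumes "1 \<le> n"
  shows "(\<lambda>x. x * sech x ^ n * cos x) integrable_on UNIV" "((\<lambda>x. x * sech x ^ n * cos x) \<longlongrightarrow> 0) at_top" "((\<lambda>x. x * sech x ^ n * cos x) \<longlongrightarrow> 0) at_bot"
proof -
  have c: "continuous_on UNIV (\<lambda>x. x * sech x ^ n * cos x)" by (intro continuous_intros cont_T cont_dT continuous_on_compose2[OF cont_T] continuous_on_compose2[OF cont_dT]; auto)
  have bd: "\<bar>x * sech x ^ n * cos x\<bar> \<le> 1 * ((1 + \<bar>x\<bar>) * sech x)" for x
  proof -
    have "\<bar>x * sech x ^ n * cos x\<bar> \<le> (1 + \<bar>x\<bar>) * sech x * 1" by (intro abs_mult_le sk_bd assms abs_tanh_le abs_cos_le_one abs_sin_le_one x_bd lns_bd T_bd dT_bd)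
    then show ?thesis by (simp add: mult.commute; simp_all add: IK_nonneg)
  qed
  show "(\<lambda>x. x * sech x ^ n * cos x) integrable_on UNIV" "((\<lambda>x. x * sech x ^ n * cos x) \<longlongrightarrow> 0) at_top" "((\<lambda>x. x * sech x ^ n * cos x) \<longlongrightarrow> 0) at_bot"
    using dom2[OF c bd] by auto
qed

lemma I_Fe:
  assumes "1 \<le> n"
  shows "(\<lambda>x. sech x ^ n * tanh x * T x * cos x) integrable_on UNIV" "((\<lambda>x. sech x ^ n * tanh x * T x * cos x) \<longlongrightarrow> 0) at_top" "((\<lambda>x. sech x ^ n * tanh x * T x * cos x) \<longlongrightarrow> 0) at_bot"
proof -
  have c: "continuous_on UNIV (\<lambda>x. sech x ^ n * tanh x * T x * cos x)" by (intro continuous_intros cont_T cont_dT continuous_on_compose2[OF cont_T] continuous_on_compose2[OF cont_dT]; auto)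
  have bd: "\<bar>sech x ^ n * tanh x * T x * cos x\<bar> \<le> IK * ((1 + \<bar>x\<bar>) * sech x)" for x
  proof -
    have "\<bar>sech x ^ n * tanh x * T x * cos x\<bar> \<le> sech x * 1 * IK * 1" by (intro abs_mult_le sk_bd assms abs_tanh_le abs_cos_le_one abs_sin_le_one x_bd lns_bd T_bd dT_bd)
    then show ?thesis by (intro fin_s; simp_all add: IK_nonneg)
  qed
  show "(\<lambda>x. sech x ^ n * tanh x * T x * cos x) integrable_on UNIV" "((\<lambda>x. sech x ^ n * tanh x * T x * cos x) \<longlongrightarrow> 0) at_top" "((\<lambda>x. sech x ^ n * tanh x * T x * cos x) \<longlongrightarrow> 0) at_bot"
    using dom2[OF c bd] by auto
qed

lemma I_Ff:
  assumes "1 \<le> n"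
  shows "(\<lambda>x. sech x ^ n * T x * sin x) integrable_on UNIV" "((\<lambda>x. sech x ^ n * T x * sin x) \<longlongrightarrow> 0) at_top" "((\<lambda>x. sech x ^ n * T x * sin x) \<longlongrightarrow> 0) at_bot"
proof -
  have c: "continuous_on UNIV (\<lambda>x. sech x ^ n * T x * sin x)" by (intro continuous_intros cont_T cont_dT continuous_on_compose2[OF cont_T] continuous_on_compose2[OF cont_dT]; auto)
  have bd: "\<bar>sech x ^ n * T x * sin x\<bar> \<le> IK * ((1 + \<bar>x\<bar>) * sech x)" for x
  proof -
    have "\<bar>sech x ^ n * T x * sin x\<bar> \<le> sech x * IK * 1" by (intro abs_mult_le sk_bd assms abs_tanh_le abs_cos_le_one abs_sin_le_one x_bd lns_bd T_bd dT_bd)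
    then show ?thesis by (intro fin_s; simp_all add: IK_nonneg)
  qed
  show "(\<lambda>x. sech x ^ n * T x * sin x) integrable_on UNIV" "((\<lambda>x. sech x ^ n * T x * sin x) \<longlongrightarrow> 0) at_top" "((\<lambda>x. sech x ^ n * T x * sin x) \<longlongrightarrow> 0) at_bot"
    using dom2[OF c bd] by auto
qed

lemma part_b:
  assumes k: "1 \<le> k"
  shows "b k = real (k + 1) * p (k + 2) - real k * p k"
proof -
  define F' where "F' x = real (k + 1) * (sech x ^ (k + 2) * cos x) - real k * (sech x ^ k * cos x) - sech x ^ k * tanh x * sin x" for x
  have dF: "((\<lambda>x. sech x ^ k * tanh x * cos x) has_real_derivative F' x) (at x)" for x
  proof -
    have d: "((\<lambda>x. sech x ^ k * tanh x * cos x) has_real_derivative (((- real k * sech x ^ k * tanh x) * tanh x + sech x ^ 2 * sech x ^ k) * cos x + (- sin x) * (sech x ^ k * tanh x))) (at x)"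
      by (intro DERIV_mult D_sechk D_tanh DERIV_cos DERIV_sin D_lnsech DT DERIV_ident)
    have e2: "sech x ^ (k + 2) = sech x ^ k * sech x ^ 2" by (rule power_add)
    have k1: "real (k + 1) = real k + 1" by simp
    have "((- real k * sech x ^ k * tanh x) * tanh x + sech x ^ 2 * sech x ^ k) * cos x + (- sin x) * (sech x ^ k * tanh x) = F' x"
    proof -
      define u where "u = sech x ^ k"
      define kk where "kk = real k"
      show ?thesis unfolding F'_def e2 k1 u_def[symmetric] kk_def[symmetric]
        using tanh_sq[of x] by algebra
    qed
    then show ?thesis using d by simp
  qed
  have ints: "(\<lambda>x. F' x) integrable_on UNIV"
    unfolding F'_def using I_ip(1)[of k] I_ip(1)[of "k+2"] I_ib(1)[of k] k
    by (intro integrable_diff integrable_add integrable_on_mult_right; simp)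
  have "integral UNIV F' = 0"
    by (rule int_deriv_zero[OF dF ints I_Fb(2)[OF k] I_Fb(3)[OF k]])
  moreover have "integral UNIV F' = real (k + 1) * p (k + 2) - real k * p k - b k"
    unfolding F'_def p_def b_def using I_ip(1)[of k] I_ip(1)[of "k+2"] I_ib(1)[of k] k
    by (simp add: integral_diff integral_add integrable_diff integrable_add integrable_on_mult_right)
  ultimately show ?thesis by (simp add: algebra_simps)
qed

lemma part_c:
  assumes k: "1 \<le> k"
  shows "c k = real (k + 1) * q (k + 2) - real k * q k + p (k + 2) - p k"
proof -
  define F' where "F' x = real (k + 1) * (sech x ^ (k + 2) * ln (sech x) * cos x) - real k * (sech x ^ k * ln (sech x) * cos x) + sech x ^ (k + 2) * cos x - sech x ^ k * cos x - sech x ^ k * ln (sech x) * tanh x * sin x" for x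
  have dF: "((\<lambda>x. sech x ^ k * ln (sech x) * tanh x * cos x) has_real_derivative F' x) (at x)" for x
  proof -
    have d: "((\<lambda>x. sech x ^ k * ln (sech x) * tanh x * cos x) has_real_derivative ((((- real k * sech x ^ k * tanh x) * ln (sech x) + (- tanh x) * sech x ^ k) * tanh x + sech x ^ 2 * (sech x ^ k * ln (sech x))) * cos x + (- sin x) * (sech x ^ k * ln (sech x) * tanh x))) (at x)"
      by (intro DERIV_mult D_sechk D_tanh DERIV_cos DERIV_sin D_lnsech DT DERIV_ident)
    have e2: "sech x ^ (k + 2) = sech x ^ k * sech x ^ 2" by (rule power_add)
    have k1: "real (k + 1) = real k + 1" by simp
    have "(((- real k * sech x ^ k * tanh x) * ln (sech x) + (- tanh x) * sech x ^ k) * tanh x + sech x ^ 2 * (sech x ^ k * ln (sech x))) * cos x + (- sin x) * (sech x ^ k * ln (sech x) * tanh x) = F' x"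
    proof -
      define u where "u = sech x ^ k"
      define kk where "kk = real k"
      show ?thesis unfolding F'_def e2 k1 u_def[symmetric] kk_def[symmetric]
        using tanh_sq[of x] by algebra
    qed
    then show ?thesis using d by simp
  qed
  have ints: "(\<lambda>x. F' x) integrable_on UNIV"
    unfolding F'_def using I_iq(1)[of k] I_iq(1)[of "k+2"] I_ip(1)[of k] I_ip(1)[of "k+2"] I_ic(1)[of k] k
    by (intro integrable_diff integrable_add integrable_on_mult_right; simp)
  have "integral UNIV F' = 0"
    by (rule int_deriv_zero[OF dF ints I_Fc(2)[OF k] I_Fc(3)[OF k]])
  moreover have "integral UNIV F' = real (k + 1) * q (k + 2) - real k * q k + p (k + 2) - p k - c k"
    unfolding F'_def p_def q_def c_def using I_iq(1)[of k] I_iq(1)[of "k+2"] I_ip(1)[of k] I_ip(1)[of "k+2"] I_ic(1)[of k] k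
    by (simp add: integral_diff integral_add integrable_diff integrable_add integrable_on_mult_right)
  ultimately show ?thesis by (simp add: algebra_simps)
qed

lemma part_d:
  assumes k: "1 \<le> k"
  shows "d k = - real k * a k + p k"
proof -
  define F' where "F' x = sech x ^ k * cos x - real k * (x * sech x ^ k * tanh x * cos x) - x * sech x ^ k * sin x" for x
  have dF: "((\<lambda>x. x * sech x ^ k * cos x) has_real_derivative F' x) (at x)" for x
  proof -
    have d: "((\<lambda>x. x * sech x ^ k * cos x) has_real_derivative ((1 * sech x ^ k + (- real k * sech x ^ k * tanh x) * x) * cos x + (- sin x) * (x * sech x ^ k))) (at x)"
      by (intro DERIV_mult D_sechk D_tanh DERIV_cos DERIV_sin D_lnsech DT DERIV_ident)
    have e2: "sech x ^ (k + 2) = sech x ^ k * sech x ^ 2" by (rule power_add)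
    have k1: "real (k + 1) = real k + 1" by simp
    have "(1 * sech x ^ k + (- real k * sech x ^ k * tanh x) * x) * cos x + (- sin x) * (x * sech x ^ k) = F' x"
    proof -
      define u where "u = sech x ^ k"
      define kk where "kk = real k"
      show ?thesis unfolding F'_def e2 k1 u_def[symmetric] kk_def[symmetric]
        by algebra
    qed
    then show ?thesis using d by simp
  qed
  have ints: "(\<lambda>x. F' x) integrable_on UNIV"
    unfolding F'_def using I_ip(1)[of k] I_ia(1)[of k] I_id(1)[of k] k
    by (intro integrable_diff integrable_add integrable_on_mult_right; simp)
  have "integral UNIV F' = 0"
    by (rule int_deriv_zero[OF dF ints I_Fd(2)[OF k] I_Fd(3)[OF k]])
  moreover have "integral UNIV F' = p k - real k * a k - d k"
    unfolding F'_def p_def a_def d_def using I_ip(1)[of k] I_ia(1)[of k] I_id(1)[of k] k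
    by (simp add: integral_diff integral_add integrable_diff integrable_add integrable_on_mult_right)
  ultimately show ?thesis by (simp add: algebra_simps)
qed

lemma part_e:
  assumes k: "1 \<le> k"
  shows "e k = s k + real k * r k - real (k + 1) * r (k + 2)"
proof -
  define F' where "F' x = real (k + 1) * (sech x ^ (k + 2) * T x * cos x) - real k * (sech x ^ k * T x * cos x) + sech x ^ k * tanh x * deriv T x * cos x - sech x ^ k * T x * tanh x * sin x" for x
  have dF: "((\<lambda>x. sech x ^ k * tanh x * T x * cos x) has_real_derivative F' x) (at x)" for x
  proof -
    have d: "((\<lambda>x. sech x ^ k * tanh x * T x * cos x) has_real_derivative ((((- real k * sech x ^ k * tanh x) * tanh x + sech x ^ 2 * sech x ^ k) * T x + deriv T x * (sech x ^ k * tanh x)) * cos x + (- sin x) * (sech x ^ k * tanh x * T x))) (at x)"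
      by (intro DERIV_mult D_sechk D_tanh DERIV_cos DERIV_sin D_lnsech DT DERIV_ident)
    have e2: "sech x ^ (k + 2) = sech x ^ k * sech x ^ 2" by (rule power_add)
    have k1: "real (k + 1) = real k + 1" by simp
    have "(((- real k * sech x ^ k * tanh x) * tanh x + sech x ^ 2 * sech x ^ k) * T x + deriv T x * (sech x ^ k * tanh x)) * cos x + (- sin x) * (sech x ^ k * tanh x * T x) = F' x"
    proof -
      define u where "u = sech x ^ k"
      define kk where "kk = real k"
      show ?thesis unfolding F'_def e2 k1 u_def[symmetric] kk_def[symmetric]
        using tanh_sq[of x] by algebra
    qed
    then show ?thesis using d by simp
  qed
  have ints: "(\<lambda>x. F' x) integrable_on UNIV"
    unfolding F'_def using I_ir(1)[of k] I_ir(1)[of "k+2"] I_ie(1)[of k] I_is(1)[of k] k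
    by (intro integrable_diff integrable_add integrable_on_mult_right; simp)
  have "integral UNIV F' = 0"
    by (rule int_deriv_zero[OF dF ints I_Fe(2)[OF k] I_Fe(3)[OF k]])
  moreover have "integral UNIV F' = real (k + 1) * r (k + 2) - real k * r k + e k - s k"
    unfolding F'_def r_def e_def s_def using I_ir(1)[of k] I_ir(1)[of "k+2"] I_ie(1)[of k] I_is(1)[of k] k
    by (simp add: integral_diff integral_add integrable_diff integrable_add integrable_on_mult_right)
  ultimately show ?thesis by (simp add: algebra_simps)
qed

lemma part_f:
  assumes k: "1 \<le> k"
  shows "f k = - r k + real k * s k"
proof -
  define F' where "F' x = sech x ^ k * deriv T x * sin x + sech x ^ k * T x * cos x - real k * (sech x ^ k * T x * tanh x * sin x)" for x
  have dF: "((\<lambda>x. sech x ^ k * T x * sin x) has_real_derivative F' x) (at x)" for x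
  proof -
    have d: "((\<lambda>x. sech x ^ k * T x * sin x) has_real_derivative (((- real k * sech x ^ k * tanh x) * T x + deriv T x * sech x ^ k) * sin x + cos x * (sech x ^ k * T x))) (at x)"
      by (intro DERIV_mult D_sechk D_tanh DERIV_cos DERIV_sin D_lnsech DT DERIV_ident)
    have e2: "sech x ^ (k + 2) = sech x ^ k * sech x ^ 2" by (rule power_add)
    have k1: "real (k + 1) = real k + 1" by simp
    have "((- real k * sech x ^ k * tanh x) * T x + deriv T x * sech x ^ k) * sin x + cos x * (sech x ^ k * T x) = F' x"
    proof -
      define u where "u = sech x ^ k"
      define kk where "kk = real k"
      show ?thesis unfolding F'_def e2 k1 u_def[symmetric] kk_def[symmetric]
        by algebra
    qed
    then show ?thesis using d by simp
  qed
  have ints: "(\<lambda>x. F' x) integrable_on UNIV"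
    unfolding F'_def using I_if(1)[of k] I_ir(1)[of k] I_is(1)[of k] k
    by (intro integrable_diff integrable_add integrable_on_mult_right; simp)
  have "integral UNIV F' = 0"
    by (rule int_deriv_zero[OF dF ints I_Ff(2)[OF k] I_Ff(3)[OF k]])
  moreover have "integral UNIV F' = f k + r k - real k * s k"
    unfolding F'_def f_def r_def s_def using I_if(1)[of k] I_ir(1)[of k] I_is(1)[of k] k
    by (simp add: integral_diff integral_add integrable_diff integrable_add integrable_on_mult_right)
  ultimately show ?thesis by (simp add: algebra_simps)
qed

theorem lemma2p19:
  fixes k :: nat
  assumes "k \<ge> 1"
  shows "b k = real (k + 1) * p (k + 2) - real k * p k \<and>
         c k = real (k + 1) * q (k + 2) - real k * q k + p (k + 2) - p k \<and>
         d k = - real k * a k + p k \<and>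
         e k = s k + real k * r k - real (k + 1) * r (k + 2) \<and>
         f k = - r k + real k * s k"
  using part_b[OF assms] part_c[OF assms] part_d[OF assms] part_e[OF assms] part_f[OF assms] by blast

end
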